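(* Let $\mathfrak{X}$ be a Bourgain–Delbaen space determined by $(\Gamma_q,i_q)_q$ and let $\Gamma'$ be a self-determined subset of $\Gamma$. For $q\in\mathbb{N}$ let $\Gamma_q''=\Gamma_q\setminus\Gamma'$. Then for every $q\in\mathbb{N}$, $i_q[\ell_\infty(\Gamma_q'')]=\langle\{d_\gamma:\gamma\in\Gamma_q''\}\rangle$, where $\ell_\infty(\Gamma_q'')$ is naturally identified with a subspace of $\ell_\infty(\Gamma_q)$. In particular, the closed linear span $Y$ of $\{d_\gamma:\gamma\in\Gamma\setminus\Gamma'\}$ is a $\mathscr{L}_\infty$-space.
   Context: Bourgain–Delbaen spaces: $(\Gamma_q)_{q\geqslant1}$ is a strictly increasing sequence of non-empty finite sets, $\Gamma=\bigcup_q\Gamma_q$, and $i_q:\ell_\infty(\Gamma_q)\to\ell_\infty(\Gamma)$ are linear extension operators (i.e. $i_q(x)|_{\Gamma_q}=x$) with $\sup_q\|i_q\|<\infty$, which are compatible: for $p<q$, $i_p=i_q\circ r_q\circ i_p$, where $r_q$ is restriction to $\Gamma_q$. Set $\Delta_1=\Gamma_1$, $\Delta_{q+1}=\Gamma_{q+1}\setminus\Gamma_q$, and for $\gamma\in\Delta_q$ let $d_\gamma=i_q(e_\gamma)$; $\mathfrak{X}$ is the closed span of $\{d_\gamma\}$ in $\ell_\infty(\Gamma)$. For $\gamma\in\Gamma$, $e_\gamma^*$ is evaluation at $\gamma$ restricted to $\mathfrak{X}$ and $(d_\gamma^* )$ are the functionals biorthogonal to $(d_\gamma)$. An infinite subset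 $\Gamma'\subseteq\Gamma$ is self-determined if each $d_\gamma^*$, $\gamma\in\Gamma'$, lies in the linear span of $\{e_\eta^*:\eta\in\Gamma'\}$. A Banach space is a $\mathscr{L}_\infty$-space if for some $\lambda$ every finite-dimensional subspace is contained in a finite-dimensional subspace $F$ that is $\lambda$-isomorphic to $\ell_\infty^{\dim F}$. $\langle\cdot\rangle$ denotes linear span. *)

theory Defs
  imports Complex_Main
begin

text \<open>The index set \<Gamma> is the whole type 'a (so \<Gamma> = UNIV).
 Elements of l_infinity(\<Gamma>) are (bounded) functions 'a \<Rightarrow> real; l_infinity(S) for S \<subseteq> \<Gamma>
 is identified with the functions vanishing outside S. The sets \<Gamma>_q and operators i_q
 are indexed by q \<ge> 1 (values at q = 0 are irrelevant).\<close>

definition supp_in :: "'a set \<Rightarrow> ('a \<Rightarrow> real) \<Rightarrow> bool" where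
  "supp_in S x \<longleftrightarrow> (\<forall>g. g \<notin> S \<longrightarrow> x g = 0)"

definition restr :: "'a set \<Rightarrow> ('a \<Rightarrow> real) \<Rightarrow> ('a \<Rightarrow> real)" where
  "restr S x = (\<lambda>g. if g \<in> S then x g else 0)"

definition unit_vec :: "'a \<Rightarrow> 'a \<Rightarrow> real" where
  "unit_vec g = (\<lambda>h. if h = g then 1 else 0)"

text \<open>sup norm (meaningful for bounded functions)\<close>
definition supnorm :: "('b \<Rightarrow> real) \<Rightarrow> real" where
  "supnorm x = (SUP g. \<bar>x g\<bar>)"

definition bounded_fn :: "('b \<Rightarrow> real) \<Rightarrow> bool" where
  "bounded_fn x \<longleftrightarrow> (\<exists>M. \<forall>g. \<bar>x g\<bar> \<le> M)"

definition lspan :: "('b \<Rightarrow> real) set \<Rightarrow> ('b \<Rightarrow> real) set" where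
  "lspan S = {x. \<exists>F c. finite F \<and> F \<subseteq> S \<and> x = (\<lambda>g. \<Sum>v\<in>F. c v * v g)}"

definition supclosure :: "('b \<Rightarrow> real) set \<Rightarrow> ('b \<Rightarrow> real) set" where
  "supclosure S = {x. bounded_fn x \<and> (\<forall>e>0. \<exists>y\<in>S. \<forall>g. \<bar>x g - y g\<bar> \<le> e)}"

definition Delta :: "(nat \<Rightarrow> 'a set) \<Rightarrow> nat \<Rightarrow> 'a set" where
  "Delta Gam q = Gam q - (\<Union>p\<in>{1..<q}. Gam p)"

definition dvec :: "(nat \<Rightarrow> 'a set) \<Rightarrow> (nat \<Rightarrow> ('a \<Rightarrow> real) \<Rightarrow> ('a \<Rightarrow> real)) \<Rightarrow> 'a \<Rightarrow> ('a \<Rightarrow> real)" where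
  "dvec Gam i g = i (THE q. 1 \<le> q \<and> g \<in> Delta Gam q) (unit_vec g)"

definition BDspace :: "(nat \<Rightarrow> 'a set) \<Rightarrow> (nat \<Rightarrow> ('a \<Rightarrow> real) \<Rightarrow> ('a \<Rightarrow> real)) \<Rightarrow> ('a \<Rightarrow> real) set" where
  "BDspace Gam i = supclosure (lspan (range (dvec Gam i)))"

definition is_dstar :: "(nat \<Rightarrow> 'a set) \<Rightarrow> (nat \<Rightarrow> ('a \<Rightarrow> real) \<Rightarrow> ('a \<Rightarrow> real)) \<Rightarrow> 'a \<Rightarrow> (('a \<Rightarrow> real) \<Rightarrow> real) \<Rightarrow> bool" where
  "is_dstar Gam i g phi \<longleftrightarrow>
     (\<forall>x\<in>BDspace Gam i. \<forall>y\<in>BDspace Gam i. \<forall>a b::real.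
        phi (\<lambda>h. a * x h + b * y h) = a * phi x + b * phi y) \<and>
     (\<exists>C. \<forall>x\<in>BDspace Gam i. \<bar>phi x\<bar> \<le> C * supnorm x) \<and>
     (\<forall>d. phi (dvec Gam i d) = (if d = g then 1 else 0))"

definition self_determined :: "(nat \<Rightarrow> 'a set) \<Rightarrow> (nat \<Rightarrow> ('a \<Rightarrow> real) \<Rightarrow> ('a \<Rightarrow> real)) \<Rightarrow> 'a set \<Rightarrow> bool" where
  "self_determined Gam i G' \<longleftrightarrow> infinite G' \<and>
     (\<forall>g\<in>G'. \<exists>F c. finite F \<and> F \<subseteq> G' \<and> is_dstar Gam i g (\<lambda>x. \<Sum>h\<in>F. c h * x h))"

definition fin_dim_subspace :: "('b \<Rightarrow> real) set \<Rightarrow> bool" where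
  "fin_dim_subspace E \<longleftrightarrow> (\<exists>B. finite B \<and> E = lspan B)"

text \<open>F is lam-isomorphic to l_infinity^n with n = dim F: a linear bijection T onto
 the vectors supported in {0..<n} with norm(T) * norm(T^-1) \<le> lam\<close>
definition linfty_iso :: "real \<Rightarrow> ('b \<Rightarrow> real) set \<Rightarrow> bool" where
  "linfty_iso lam F \<longleftrightarrow> (\<exists>(n::nat) (T :: ('b \<Rightarrow> real) \<Rightarrow> (nat \<Rightarrow> real)) a b.
      bij_betw T F {v. \<forall>k\<ge>n. v k = 0} \<and>
      (\<forall>x\<in>F. \<forall>y\<in>F. \<forall>s t::real. T (\<lambda>h. s * x h + t * y h) = (\<lambda>k. s * T x k + t * T y k)) \<and>
      a * b \<le> lam \<and>
      (\<forall>x\<in>F. supnorm (T x) \<le> a * supnorm x) \<and>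
      (\<forall>x\<in>F. supnorm x \<le> b * supnorm (T x)))"

definition Linf_space :: "('b \<Rightarrow> real) set \<Rightarrow> bool" where
  "Linf_space Y \<longleftrightarrow> (\<exists>lam. \<forall>E. fin_dim_subspace E \<and> E \<subseteq> Y \<longrightarrow>
      (\<exists>F. fin_dim_subspace F \<and> E \<subseteq> F \<and> F \<subseteq> Y \<and> linfty_iso lam F))"

end

theory Submission
  imports Defs
begin

lemma sup_ge: "bounded_fn x \<Longrightarrow> \<bar>x g\<bar> \<le> supnorm x"
  unfolding supnorm_def bounded_fn_def
  by (rule cSUP_upper) (auto simp: bdd_above_def)

lemma sup_le: "(\<And>g. \<bar>x g\<bar> \<le> M) \<Longrightarrow> supnorm x \<le> M"
  unfolding supnorm_def by (rule cSUP_least) auto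

lemma bounded_fnI: "(\<And>g. \<bar>x g\<bar> \<le> M) \<Longrightarrow> bounded_fn x"
  unfolding bounded_fn_def by blast

lemma sup_nonneg: "bounded_fn x \<Longrightarrow> 0 \<le> supnorm x"
  using sup_ge[of x undefined] by linarith

lemma lspan_finite:
  assumes "finite B"
  shows "x \<in> lspan B \<longleftrightarrow> (\<exists>c. x = (\<lambda>g. \<Sum>v\<in>B. c v * v g))"
proof
  assume "x \<in> lspan B"
  then obtain F c where F: "finite F" "F \<subseteq> B" "x = (\<lambda>g. \<Sum>v\<in>F. c v * v g)"
    unfolding lspan_def by blast
  have "x = (\<lambda>g. \<Sum>v\<in>B. (if v \<in> F then c v else 0) * v g)"
  proof
    fix g
    have "(\<Sum>v\<in>B. (if v \<in> F then c v else 0) * v g) = (\<Sum>v\<in>F. (if v \<in> F then c v else 0) * v g)"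
      by (rule sum.mono_neutral_right) (use assms F in auto)
    then show "x g = (\<Sum>v\<in>B. (if v \<in> F then c v else 0) * v g)" using F by simp
  qed
  then show "\<exists>c. x = (\<lambda>g. \<Sum>v\<in>B. c v * v g)" by (rule exI[of _ "\<lambda>v. if v \<in> F then c v else 0"])
next
  assume "\<exists>c. x = (\<lambda>g. \<Sum>v\<in>B. c v * v g)"
  then show "x \<in> lspan B" unfolding lspan_def using assms by blast
qed

lemma lspan_image:
  "x \<in> lspan (f ` S) \<longleftrightarrow> (\<exists>G a. finite G \<and> G \<subseteq> S \<and> x = (\<lambda>t. \<Sum>\<gamma>\<in>G. a \<gamma> * f \<gamma> t))"
proof
  assume "x \<in> lspan (f ` S)"
  then obtain F c where F: "finite F" "F \<subseteq> f ` S" "x = (\<lambda>g. \<Sum>v\<in>F. c v * v g)"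
    unfolding lspan_def by blast
  define G where "G = inv_into S f ` F"
  have inj: "inj_on (inv_into S f) F" using F(2) by (rule inj_on_inv_into)
  have ff: "\<And>v. v \<in> F \<Longrightarrow> f (inv_into S f v) = v" using F(2) by (auto intro: f_inv_into_f)
  have "x = (\<lambda>t. \<Sum>\<gamma>\<in>G. c (f \<gamma>) * f \<gamma> t)"
  proof
    fix t
    have "(\<Sum>\<gamma>\<in>G. c (f \<gamma>) * f \<gamma> t) = (\<Sum>v\<in>F. c (f (inv_into S f v)) * f (inv_into S f v) t)"
      unfolding G_def by (rule sum.reindex[OF inj, unfolded comp_def])
    also have "\<dots> = (\<Sum>v\<in>F. c v * v t)" by (rule sum.cong) (auto simp: ff)
    finally show "x t = (\<Sum>\<gamma>\<in>G. c (f \<gamma>) * f \<gamma> t)" using F by simp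
  qed
  moreover have "finite G" "G \<subseteq> S" using F unfolding G_def by (auto intro: inv_into_into)
  ultimately show "\<exists>G a. finite G \<and> G \<subseteq> S \<and> x = (\<lambda>t. \<Sum>\<gamma>\<in>G. a \<gamma> * f \<gamma> t)"
    by (intro exI[of _ G] exI[of _ "\<lambda>\<gamma>. c (f \<gamma>)"]) simp
next
  assume "\<exists>G a. finite G \<and> G \<subseteq> S \<and> x = (\<lambda>t. \<Sum>\<gamma>\<in>G. a \<gamma> * f \<gamma> t)"
  then obtain G a where G: "finite G" "G \<subseteq> S" "x = (\<lambda>t. \<Sum>\<gamma>\<in>G. a \<gamma> * f \<gamma> t)" by blast
  define c where "c v = (\<Sum>\<gamma>\<in>{\<gamma>\<in>G. f \<gamma> = v}. a \<gamma>)" for v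
  have "x = (\<lambda>t. \<Sum>v\<in>f ` G. c v * v t)"
  proof
    fix t
    have "(\<Sum>\<gamma>\<in>G. a \<gamma> * f \<gamma> t) = (\<Sum>v\<in>f ` G. \<Sum>\<gamma>\<in>{\<gamma>\<in>G. f \<gamma> = v}. a \<gamma> * f \<gamma> t)"
      by (rule sum.image_gen[OF G(1)])
    also have "\<dots> = (\<Sum>v\<in>f ` G. c v * v t)"
      unfolding c_def sum_distrib_right by (rule sum.cong) auto
    finally show "x t = (\<Sum>v\<in>f ` G. c v * v t)" using G by simp
  qed
  then show "x \<in> lspan (f ` S)" unfolding lspan_def using G
    by (intro CollectI exI[of _ "f ` G"] exI[of _ c]) auto
qed


lemma lspan_comb:
  assumes "x \<in> lspan V" "y \<in> lspan V"
  shows "(\<lambda>g. a * x g + b * y g) \<in> lspan V"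
proof -
  obtain F c where F: "finite F" "F \<subseteq> V" "x = (\<lambda>g. \<Sum>v\<in>F. c v * v g)"
    using assms(1) unfolding lspan_def by blast
  obtain F' c' where F': "finite F'" "F' \<subseteq> V" "y = (\<lambda>g. \<Sum>v\<in>F'. c' v * v g)"
    using assms(2) unfolding lspan_def by blast
  have fu: "finite (F \<union> F')" using F F' by auto
  have x1: "x \<in> lspan (F \<union> F')" unfolding lspan_def using F
    by (intro CollectI exI[of _ F] exI[of _ c]) auto
  have x2: "y \<in> lspan (F \<union> F')" unfolding lspan_def using F'
    by (intro CollectI exI[of _ F'] exI[of _ c']) auto
  obtain d where d: "x = (\<lambda>g. \<Sum>v\<in>F \<union> F'. d v * v g)" using x1 lspan_finite[OF fu] by blast
  obtain d' where d': "y = (\<lambda>g. \<Sum>v\<in>F \<union> F'. d' v * v g)" using x2 lspan_finite[OF fu] by blast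
  have "(\<lambda>g. a * x g + b * y g) = (\<lambda>g. \<Sum>v\<in>F \<union> F'. (a * d v + b * d' v) * v g)"
    unfolding d d' by (simp add: sum_distrib_left sum.distrib distrib_right mult.assoc)
  moreover have "F \<union> F' \<subseteq> V" using F F' by auto
  ultimately show ?thesis unfolding lspan_def using fu
    by (intro CollectI exI[of _ "F \<union> F'"] exI[of _ "\<lambda>v. a * d v + b * d' v"]) auto
qed

lemma lspan_zero: "(\<lambda>g. 0) \<in> lspan V"
  unfolding lspan_def by (intro CollectI exI[of _ "{}"]) auto

lemma lspan_sum:
  assumes "finite A" "\<And>a. a \<in> A \<Longrightarrow> f a \<in> lspan V"
  shows "(\<lambda>g. \<Sum>a\<in>A. c a * f a g) \<in> lspan V"
  using assms
proof (induction A rule: finite_induct)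
  case empty then show ?case using lspan_zero by simp
next
  case (insert a A)
  have "(\<lambda>g. c a * f a g + 1 * (\<Sum>a\<in>A. c a * f a g)) \<in> lspan V"
    by (rule lspan_comb) (use insert in auto)
  then show ?case using insert by simp
qed

lemma lspan_mono: "V \<subseteq> W \<Longrightarrow> lspan V \<subseteq> lspan W"
  unfolding lspan_def by blast

lemma lspan_base: "v \<in> V \<Longrightarrow> v \<in> lspan V"
  unfolding lspan_def by (intro CollectI exI[of _ "{v}"] exI[of _ "\<lambda>_. 1"]) auto

lemma lspan_insert_dec:
  assumes "x \<in> lspan (insert w B)"
  shows "\<exists>x' t. x' \<in> lspan B \<and> x = (\<lambda>g. x' g + t * w g)"
proof -
  obtain F c where F: "finite F" "F \<subseteq> insert w B" "x = (\<lambda>g. \<Sum>v\<in>F. c v * v g)"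
    using assms unfolding lspan_def by blast
  define x' where "x' = (\<lambda>g. \<Sum>v\<in>F - {w}. c v * v g)"
  have x': "x' \<in> lspan B" unfolding lspan_def x'_def using F
    by (intro CollectI exI[of _ "F - {w}"] exI[of _ c]) auto
  show ?thesis
  proof (cases "w \<in> F")
    case True
    have "x = (\<lambda>g. x' g + c w * w g)"
      unfolding F(3) x'_def using F(1) True by (simp add: sum.remove add.commute)
    then show ?thesis using x' by blast
  next
    case False
    have "x = (\<lambda>g. x' g + 0 * w g)"
      unfolding F(3) x'_def using False by simp
    then show ?thesis using x' by blast
  qed
qed

lemma proj:
  fixes B :: "('a \<Rightarrow> real) set"
  assumes "finite B"
  shows "\<exists>D h K. finite D \<and> 0 \<le> K \<and>
    (\<forall>v\<in>B. \<forall>x y a b. h v (\<lambda>g. a * x g + b * y g) = a * h v x + b * h v y) \<and>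
    (\<forall>v\<in>B. \<forall>x y. (\<forall>d\<in>D. x d = y d) \<longrightarrow> h v x = h v y) \<and>
    (\<forall>v\<in>B. \<forall>x M. 0 \<le> M \<longrightarrow> (\<forall>d\<in>D. \<bar>x d\<bar> \<le> M) \<longrightarrow> \<bar>h v x\<bar> \<le> K * M) \<and>
    (\<forall>x\<in>lspan B. x = (\<lambda>g. \<Sum>v\<in>B. h v x * v g))"
  using assms
proof (induction B rule: finite_induct)
  case empty
  have "\<forall>x\<in>lspan ({}::('a \<Rightarrow> real) set). x = (\<lambda>g. 0)"
    unfolding lspan_def by auto
  then show ?case
    by (intro exI[of _ "{}"] exI[of _ "\<lambda>v x. 0"] exI[of _ "0::real"]) auto
next
  case (insert w B)
  then obtain D h K where IH: "finite D \<and> 0 \<le> K \<and>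
    (\<forall>v\<in>B. \<forall>x y a b. h v (\<lambda>g. a * x g + b * y g) = a * h v x + b * h v y) \<and>
    (\<forall>v\<in>B. \<forall>x y. (\<forall>d\<in>D. x d = y d) \<longrightarrow> h v x = h v y) \<and>
    (\<forall>v\<in>B. \<forall>x M. 0 \<le> M \<longrightarrow> (\<forall>d\<in>D. \<bar>x d\<bar> \<le> M) \<longrightarrow> \<bar>h v x\<bar> \<le> K * M) \<and>
    (\<forall>x\<in>lspan B. x = (\<lambda>g. \<Sum>v\<in>B. h v x * v g))"
    by (elim exE)
  have D: "finite D" and K: "0 \<le> K" using IH by blast+
  have hlin: "\<And>v x y a b. v \<in> B \<Longrightarrow> h v (\<lambda>g. a * x g + b * y g) = a * h v x + b * h v y"
    using IH by blast
  have hloc: "\<And>v x y. v \<in> B \<Longrightarrow> (\<forall>d\<in>D. x d = y d) \<Longrightarrow> h v x = h v y"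
    using IH by blast
  have hbd: "\<And>v x M. v \<in> B \<Longrightarrow> 0 \<le> M \<Longrightarrow> (\<forall>d\<in>D. \<bar>x d\<bar> \<le> M) \<Longrightarrow> \<bar>h v x\<bar> \<le> K * M"
    using IH by blast
  have hrep: "\<And>x. x \<in> lspan B \<Longrightarrow> x = (\<lambda>g. \<Sum>v\<in>B. h v x * v g)"
    using IH by blast
  define R where "R x = (\<lambda>g. \<Sum>v\<in>B. h v x * v g)" for x
  define r where "r = (\<lambda>g. w g - R w g)"
  have Rlin: "R (\<lambda>g. a * x g + b * y g) g = a * R x g + b * R y g" for a b x y g
    unfolding R_def by (simp add: hlin sum.distrib sum_distrib_left algebra_simps)
  have RinB: "R x \<in> lspan B" for x
    unfolding R_def by (subst lspan_finite[OF insert(1)]) (rule exI[of _ "\<lambda>v. h v x"], simp)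
  have dec: "\<exists>x' t. x' \<in> lspan B \<and> x = (\<lambda>g. x' g + t * w g)" if "x \<in> lspan (insert w B)" for x
    using lspan_insert_dec[OF that] .
  show ?case
  proof (cases "\<forall>g. r g = 0")
    case True
    then have wR: "R w g = w g" for g unfolding r_def by auto
    define h' where "h' = h(w := (\<lambda>x. 0))"
    have hh: "v \<in> B \<Longrightarrow> h' v = h v" for v using insert(2) unfolding h'_def by auto
    have rep: "x = (\<lambda>g. \<Sum>v\<in>insert w B. h' v x * v g)" if xin: "x \<in> lspan (insert w B)" for x
    proof -
      obtain x' t where xt: "x' \<in> lspan B" "x = (\<lambda>g. x' g + t * w g)" using dec[OF xin] by blast
      have "x = (\<lambda>g. 1 * x' g + t * R w g)" by (simp add: xt(2) wR)
      then have "x \<in> lspan B" using lspan_comb[OF xt(1) RinB, of 1 t w] by simp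
      then have "x = (\<lambda>g. \<Sum>v\<in>B. h v x * v g)" by (rule hrep)
      also have "\<dots> = (\<lambda>g. \<Sum>v\<in>insert w B. h' v x * v g)"
        using insert(1,2) hh by (simp add: h'_def cong: sum.cong)
      finally show ?thesis .
    qed
    show ?thesis
      apply (intro exI[of _ D] exI[of _ h'] exI[of _ K] conjI ballI allI impI)
      subgoal by (rule D)
      subgoal by (rule K)
      subgoal for v x y a b using hlin[of v] hh[of v] insert(2) by (cases "v = w") (auto simp: h'_def)
      subgoal for v x y using hloc hh insert(2) by (cases "v = w") (auto simp: h'_def)
      subgoal for v x M using hbd hh K by (cases "v = w") (auto simp: h'_def)
      subgoal for x by (rule rep)
      done
  next
    case False
    then obtain d0 where d0: "r d0 \<noteq> 0" by blast
    define hw where "hw x = (x d0 - (\<Sum>v\<in>B. h v x * v d0)) / r d0" for x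
    define h' where "h' v x = (if v = w then hw x else h v x - hw x * h v w)" for v x
    define K1 where "K1 = (1 + K * (\<Sum>v\<in>B. \<bar>v d0\<bar>)) / \<bar>r d0\<bar>"
    define K' where "K' = K + K1 + K1 * (\<Sum>v\<in>B. \<bar>h v w\<bar>)"
    have K1: "0 \<le> K1" unfolding K1_def using K by (simp add: sum_nonneg)
    have K': "0 \<le> K'" unfolding K'_def using K K1 by (simp add: sum_nonneg)
    have hwlin: "hw (\<lambda>g. a * x g + b * y g) = a * hw x + b * hw y" for a b x y
    proof -
      have "(\<Sum>v\<in>B. h v (\<lambda>g. a * x g + b * y g) * v d0)
          = a * (\<Sum>v\<in>B. h v x * v d0) + b * (\<Sum>v\<in>B. h v y * v d0)"
        by (simp add: hlin sum.distrib sum_distrib_left algebra_simps)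
      then show ?thesis unfolding hw_def using d0 by (simp add: field_simps)
    qed
    have h'lin: "h' v (\<lambda>g. a * x g + b * y g) = a * h' v x + b * h' v y"
      if "v \<in> insert w B" for v a b x y
      using that hwlin hlin unfolding h'_def by (auto simp: algebra_simps)
    have hwloc: "hw x = hw y" if "\<forall>d\<in>insert d0 D. x d = y d" for x y
    proof -
      have "h v x = h v y" if "v \<in> B" for v using hloc[OF that] \<open>\<forall>d\<in>insert d0 D. x d = y d\<close> by auto
      then show ?thesis unfolding hw_def using that by simp
    qed
    have h'loc: "h' v x = h' v y" if "v \<in> insert w B" "\<forall>d\<in>insert d0 D. x d = y d" for v x y
      using that hwloc[OF that(2)] hloc unfolding h'_def by auto
    have hwbd: "\<bar>hw x\<bar> \<le> K1 * M" if M: "0 \<le> M" "\<forall>d\<in>insert d0 D. \<bar>x d\<bar> \<le> M" for x M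
    proof -
      have "\<bar>\<Sum>v\<in>B. h v x * v d0\<bar> \<le> (\<Sum>v\<in>B. \<bar>h v x * v d0\<bar>)" by (rule sum_abs)
      also have "\<dots> \<le> (\<Sum>v\<in>B. K * M * \<bar>v d0\<bar>)"
      proof (rule sum_mono)
        fix v assume "v \<in> B"
        then have "\<bar>h v x\<bar> \<le> K * M" using hbd M by auto
        then show "\<bar>h v x * v d0\<bar> \<le> K * M * \<bar>v d0\<bar>"
          by (simp add: abs_mult mult_right_mono)
      qed
      also have "\<dots> = K * M * (\<Sum>v\<in>B. \<bar>v d0\<bar>)" by (simp add: sum_distrib_left)
      finally have s: "\<bar>\<Sum>v\<in>B. h v x * v d0\<bar> \<le> K * M * (\<Sum>v\<in>B. \<bar>v d0\<bar>)" .
      have "\<bar>x d0 - (\<Sum>v\<in>B. h v x * v d0)\<bar> \<le> M + K * M * (\<Sum>v\<in>B. \<bar>v d0\<bar>)"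
        using s M by (auto intro: order.trans[OF abs_triangle_ineq4])
      also have "\<dots> = M * (1 + K * (\<Sum>v\<in>B. \<bar>v d0\<bar>))" by (simp add: algebra_simps)
      finally have "\<bar>x d0 - (\<Sum>v\<in>B. h v x * v d0)\<bar> / \<bar>r d0\<bar> \<le> M * (1 + K * (\<Sum>v\<in>B. \<bar>v d0\<bar>)) / \<bar>r d0\<bar>"
        by (simp add: divide_right_mono)
      then show ?thesis unfolding hw_def K1_def by (simp add: abs_divide mult.commute)
    qed
    have h'bd: "\<bar>h' v x\<bar> \<le> K' * M"
      if v: "v \<in> insert w B" and M: "0 \<le> M" "\<forall>d\<in>insert d0 D. \<bar>x d\<bar> \<le> M" for v x M
    proof (cases "v = w")
      case True
      have "K1 * M \<le> K' * M" unfolding K'_def using K K1 M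
        by (intro mult_right_mono) (auto simp: sum_nonneg mult_nonneg_nonneg)
      then show ?thesis using hwbd[OF M] True unfolding h'_def by simp
    next
      case False
      then have vB: "v \<in> B" using v by auto
      have a: "\<bar>h v x\<bar> \<le> K * M" using hbd[OF vB M(1)] M(2) by auto
      have b: "\<bar>hw x\<bar> \<le> K1 * M" by (rule hwbd[OF M])
      have c: "\<bar>h v w\<bar> \<le> (\<Sum>v\<in>B. \<bar>h v w\<bar>)"
        using member_le_sum[of v B "\<lambda>v. \<bar>h v w\<bar>"] vB insert(1) by auto
      have "\<bar>hw x * h v w\<bar> \<le> K1 * M * (\<Sum>v\<in>B. \<bar>h v w\<bar>)"
        unfolding abs_mult using b c by (intro mult_mono) (auto simp: sum_nonneg)
      then have "\<bar>h v x - hw x * h v w\<bar> \<le> K * M + K1 * M * (\<Sum>v\<in>B. \<bar>h v w\<bar>)"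
        using a by (auto intro: order.trans[OF abs_triangle_ineq4])
      also have "\<dots> \<le> K' * M" unfolding K'_def using K1 M by (simp add: algebra_simps)
      finally show ?thesis unfolding h'_def using False by simp
    qed
    have rep: "x = (\<lambda>g. \<Sum>v\<in>insert w B. h' v x * v g)" if xin: "x \<in> lspan (insert w B)" for x
    proof -
      obtain x' t where xt: "x' \<in> lspan B" "x = (\<lambda>g. x' g + t * w g)" using dec[OF xin] by blast
      have x1: "x = (\<lambda>g. 1 * x' g + t * w g)" using xt(2) by simp
      have hx: "h v x = h v x' + t * h v w" if "v \<in> B" for v
        using hlin[OF that, of 1 x' t w] x1 by simp
      have Rx': "R x' = x'" using hrep[OF xt(1)] unfolding R_def by simp
      have "x d0 - (\<Sum>v\<in>B. h v x * v d0) = t * r d0"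
      proof -
        have "(\<Sum>v\<in>B. h v x * v d0) = R x' d0 + t * R w d0"
          unfolding R_def by (simp add: hx sum.distrib sum_distrib_left algebra_simps)
        then show ?thesis using Rx' xt(2) unfolding r_def by (simp add: algebra_simps)
      qed
      then have hwx: "hw x = t" unfolding hw_def using d0 by simp
      have hB: "h' v x = h v x'" if "v \<in> B" for v
        using that insert(2) hx[OF that] hwx unfolding h'_def by auto
      have "(\<lambda>g. \<Sum>v\<in>insert w B. h' v x * v g) = (\<lambda>g. t * w g + (\<Sum>v\<in>B. h v x' * v g))"
      proof
        fix g
        have "(\<Sum>v\<in>insert w B. h' v x * v g) = h' w x * w g + (\<Sum>v\<in>B. h' v x * v g)"
          using insert(1,2) by simp
        also have "\<dots> = t * w g + (\<Sum>v\<in>B. h v x' * v g)"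
          using hB hwx unfolding h'_def by (simp cong: sum.cong)
        finally show "(\<Sum>v\<in>insert w B. h' v x * v g) = t * w g + (\<Sum>v\<in>B. h v x' * v g)" .
      qed
      also have "\<dots> = (\<lambda>g. t * w g + R x' g)" unfolding R_def by simp
      also have "\<dots> = x" using Rx' xt(2) by (auto simp: algebra_simps)
      finally show ?thesis by simp
    qed
    show ?thesis
      apply (intro exI[of _ "insert d0 D"] exI[of _ h'] exI[of _ K'] conjI ballI allI impI)
      subgoal using D by simp
      subgoal by (rule K')
      subgoal for v x y a b by (rule h'lin)
      subgoal for v x y by (rule h'loc)
      subgoal for v x M by (rule h'bd)
      subgoal for x by (rule rep)
      done
  qed
qed

lemma supp_in_sum:
  "(\<And>a. a \<in> A \<Longrightarrow> supp_in S (f a)) \<Longrightarrow> supp_in S (\<lambda>t. \<Sum>a\<in>A. c a * f a t)"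
  unfolding supp_in_def by auto

lemma supp_in_unit: "g \<in> S \<Longrightarrow> supp_in S (unit_vec g)"
  unfolding supp_in_def unit_vec_def by auto

lemma supp_in_restr: "supp_in S (restr S x)"
  unfolding supp_in_def restr_def by auto

lemma unit_expand:
  assumes "supp_in S x" "finite S"
  shows "x = (\<lambda>t. \<Sum>\<gamma>\<in>S. x \<gamma> * unit_vec \<gamma> t)"
proof
  fix t
  have "(\<Sum>\<gamma>\<in>S. x \<gamma> * unit_vec \<gamma> t) = (\<Sum>\<gamma>\<in>S. if t = \<gamma> then x \<gamma> else 0)"
    unfolding unit_vec_def by (rule sum.cong) auto
  also have "\<dots> = (if t \<in> S then x t else 0)" using assms(2) by (simp add: sum.delta)
  also have "\<dots> = x t" using assms(1) unfolding supp_in_def by auto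
  finally show "x t = (\<Sum>\<gamma>\<in>S. x \<gamma> * unit_vec \<gamma> t)" by simp
qed

locale bd =
  fixes Gam :: "nat \<Rightarrow> 'a set"
    and i :: "nat \<Rightarrow> ('a \<Rightarrow> real) \<Rightarrow> ('a \<Rightarrow> real)"
    and G' :: "'a set"
  assumes fin: "\<And>q. 1 \<le> q \<Longrightarrow> finite (Gam q) \<and> Gam q \<noteq> {}"
    and incr: "\<And>q. 1 \<le> q \<Longrightarrow> Gam q \<subset> Gam (Suc q)"
    and union: "(\<Union>q\<in>{1..}. Gam q) = UNIV"
    and lin: "\<And>q x y a b. 1 \<le> q \<Longrightarrow> supp_in (Gam q) x \<Longrightarrow> supp_in (Gam q) y \<Longrightarrow>
               i q (\<lambda>g. a * x g + b * y g) = (\<lambda>g. a * i q x g + b * i q y g)"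
    and ext: "\<And>q x g. 1 \<le> q \<Longrightarrow> supp_in (Gam q) x \<Longrightarrow> g \<in> Gam q \<Longrightarrow> i q x g = x g"
    and bnd: "\<exists>C. \<forall>q\<ge>1. \<forall>x. supp_in (Gam q) x \<longrightarrow> supnorm (i q x) \<le> C * supnorm x"
    and bddval: "\<And>q x. 1 \<le> q \<Longrightarrow> supp_in (Gam q) x \<Longrightarrow> bounded_fn (i q x)"
    and compat: "\<And>p q x. 1 \<le> p \<Longrightarrow> p < q \<Longrightarrow> supp_in (Gam p) x \<Longrightarrow>
               i p x = i q (restr (Gam q) (i p x))"
    and sd: "self_determined Gam i G'"
begin

abbreviation d where "d \<equiv> dvec Gam i"

lemma finG: "1 \<le> q \<Longrightarrow> finite (Gam q)" using fin by blast

lemma mono_Gam: assumes "1 \<le> p" "p \<le> q" shows "Gam p \<subseteq> Gam q"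
  using assms(2)
proof (induction q rule: nat_induct_at_least)
  case base then show ?case by simp
next
  case (Suc n)
  then show ?case using incr[of n] assms(1) by auto
qed

definition lev :: "'a \<Rightarrow> nat" where "lev g = (LEAST q. 1 \<le> q \<and> g \<in> Gam q)"

lemma ex_lev: "\<exists>q. 1 \<le> q \<and> g \<in> Gam q"
  using union by blast

lemma lev1: "1 \<le> lev g" and levG: "g \<in> Gam (lev g)"
  unfolding lev_def using LeastI_ex[OF ex_lev[of g]] by auto

lemma lev_le: "1 \<le> q \<Longrightarrow> g \<in> Gam q \<Longrightarrow> lev g \<le> q"
  unfolding lev_def by (rule Least_le) simp

lemma lev_iff: "1 \<le> q \<Longrightarrow> g \<in> Gam q \<longleftrightarrow> lev g \<le> q"
  using lev_le mono_Gam[OF lev1] levG by blast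

lemma Delta_iff: "1 \<le> q \<Longrightarrow> g \<in> Delta Gam q \<longleftrightarrow> lev g = q"
proof -
  assume q: "1 \<le> q"
  have "g \<in> Delta Gam q \<longleftrightarrow> lev g \<le> q \<and> (\<forall>p\<in>{1..<q}. \<not> lev g \<le> p)"
    unfolding Delta_def using lev_iff q by auto
  also have "\<dots> \<longleftrightarrow> lev g = q" using lev1[of g] by force
  finally show ?thesis .
qed

lemma dvec_eq: "d g = i (lev g) (unit_vec g)"
proof -
  have "(THE q. 1 \<le> q \<and> g \<in> Delta Gam q) = lev g"
    by (rule the_equality) (use Delta_iff lev1 in auto)
  then show ?thesis unfolding dvec_def by simp
qed

lemma d_lower: "lev h < lev g \<Longrightarrow> d g h = 0"
proof -
  assume a: "lev h < lev g"
  have "h \<in> Gam (lev g)" using lev_iff[OF lev1[of g]] a by simp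
  then have "d g h = unit_vec g h"
    unfolding dvec_eq by (rule ext[OF lev1 supp_in_unit[OF levG]])
  then show ?thesis using a unfolding unit_vec_def by auto
qed

lemma d_same: "lev h = lev g \<Longrightarrow> d g h = (if h = g then 1 else 0)"
proof -
  assume a: "lev h = lev g"
  have "h \<in> Gam (lev g)" using levG[of h] a by simp
  then have "d g h = unit_vec g h"
    unfolding dvec_eq by (rule ext[OF lev1 supp_in_unit[OF levG]])
  then show ?thesis unfolding unit_vec_def by auto
qed

lemma d_self: "d g g = 1" using d_same by simp

lemma i_zero: "1 \<le> q \<Longrightarrow> i q (\<lambda>g. 0) = (\<lambda>g. 0)"
  using lin[of q "\<lambda>g. 0" "\<lambda>g. 0" 0 0] by (simp add: supp_in_def)

lemma i_sum:
  assumes q: "1 \<le> q" and A: "finite A" and f: "\<And>a. a \<in> A \<Longrightarrow> supp_in (Gam q) (f a)"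
  shows "i q (\<lambda>t. \<Sum>a\<in>A. c a * f a t) = (\<lambda>t. \<Sum>a\<in>A. c a * i q (f a) t)"
  using A f
proof (induction A rule: finite_induct)
  case empty then show ?case using i_zero[OF q] by simp
next
  case (insert a A)
  have s: "supp_in (Gam q) (\<lambda>t. \<Sum>a\<in>A. c a * f a t)"
    by (rule supp_in_sum) (use insert in auto)
  have "i q (\<lambda>t. c a * f a t + 1 * (\<Sum>a\<in>A. c a * f a t))
      = (\<lambda>t. c a * i q (f a) t + 1 * i q (\<lambda>t. \<Sum>a\<in>A. c a * f a t) t)"
    by (rule lin[OF q]) (use insert s in auto)
  then show ?case using insert by simp
qed

lemma i_diff:
  assumes "1 \<le> q" "supp_in (Gam q) x" "supp_in (Gam q) y"
  shows "i q x g - i q y g = i q (\<lambda>t. x t - y t) g"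
  using lin[OF assms, of 1 "-1"] by simp

lemma EXP:
  assumes q: "1 \<le> q" and z: "supp_in (Gam q) z"
    and lv: "\<And>\<delta>. \<delta> \<in> Gam q \<Longrightarrow> z \<delta> \<noteq> 0 \<Longrightarrow> lev \<delta> = q"
  shows "i q z = (\<lambda>t. \<Sum>\<delta>\<in>Gam q. z \<delta> * d \<delta> t)"
proof -
  have "i q z = i q (\<lambda>t. \<Sum>\<gamma>\<in>Gam q. z \<gamma> * unit_vec \<gamma> t)"
    using unit_expand[OF z finG[OF q]] by simp
  also have "\<dots> = (\<lambda>t. \<Sum>\<gamma>\<in>Gam q. z \<gamma> * i q (unit_vec \<gamma>) t)"
    by (rule i_sum[OF q finG[OF q]]) (rule supp_in_unit)
  also have "\<dots> = (\<lambda>t. \<Sum>\<delta>\<in>Gam q. z \<delta> * d \<delta> t)"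
  proof -
    have "z \<gamma> * i q (unit_vec \<gamma>) t = z \<gamma> * d \<gamma> t" if "\<gamma> \<in> Gam q" for \<gamma> t
      using lv[OF that] unfolding dvec_eq by (cases "z \<gamma> = 0") auto
    then show ?thesis by (auto intro!: sum.cong)
  qed
  finally show ?thesis .
qed

lemma iq_span:
  assumes q: "1 \<le> q"
  shows "supp_in (Gam q) x \<Longrightarrow> \<exists>a. i q x = (\<lambda>t. \<Sum>\<delta>\<in>Gam q. a \<delta> * d \<delta> t)"
  using q
proof (induction q arbitrary: x rule: nat_induct_at_least)
  case base
  have "i 1 x = (\<lambda>t. \<Sum>\<delta>\<in>Gam 1. x \<delta> * d \<delta> t)"
  proof (rule EXP)
    show "supp_in (Gam 1) x" using base by simp
    show "lev \<delta> = 1" if "\<delta> \<in> Gam 1" for \<delta> using lev_le[of 1 \<delta>] lev1[of \<delta>] that by simp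
  qed simp
  then show ?case by blast
next
  case (Suc n)
  note n = \<open>1 \<le> n\<close>
  have n1: "1 \<le> Suc n" by simp
  define x1 where "x1 = restr (Gam n) x"
  define w where "w = restr (Gam (Suc n)) (i n x1)"
  define z where "z = (\<lambda>t. w t - x t)"
  have sx1: "supp_in (Gam n) x1" unfolding x1_def by (rule supp_in_restr)
  have sw: "supp_in (Gam (Suc n)) w" unfolding w_def by (rule supp_in_restr)
  have sz: "supp_in (Gam (Suc n)) z" using sw Suc.prems unfolding z_def supp_in_def by auto
  have GnS: "Gam n \<subseteq> Gam (Suc n)" using mono_Gam[OF n] by simp
  have zlev: "lev \<delta> = Suc n" if "\<delta> \<in> Gam (Suc n)" "z \<delta> \<noteq> 0" for \<delta>
  proof -
    have "\<delta> \<notin> Gam n"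
    proof
      assume dn: "\<delta> \<in> Gam n"
      have "w \<delta> = x \<delta>" unfolding w_def restr_def using dn GnS ext[OF n sx1 dn]
        by (auto simp: x1_def restr_def)
      then show False using that(2) unfolding z_def by simp
    qed
    then show ?thesis using lev_iff[OF n, of \<delta>] lev_iff[OF n1, of \<delta>] that(1) by simp
  qed
  have iz: "i (Suc n) z = (\<lambda>t. \<Sum>\<delta>\<in>Gam (Suc n). z \<delta> * d \<delta> t)"
    by (rule EXP[OF n1 sz zlev])
  have iw: "i (Suc n) w = i n x1"
    unfolding w_def using compat[OF n _ sx1, of "Suc n"] by simp
  obtain a where a: "i n x1 = (\<lambda>t. \<Sum>\<delta>\<in>Gam n. a \<delta> * d \<delta> t)" using Suc.IH[OF sx1] by blast
  have a': "i n x1 = (\<lambda>t. \<Sum>\<delta>\<in>Gam (Suc n). (if \<delta> \<in> Gam n then a \<delta> else 0) * d \<delta> t)"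
  proof
    fix t
    have "(\<Sum>\<delta>\<in>Gam (Suc n). (if \<delta> \<in> Gam n then a \<delta> else 0) * d \<delta> t)
        = (\<Sum>\<delta>\<in>Gam n. (if \<delta> \<in> Gam n then a \<delta> else 0) * d \<delta> t)"
      by (rule sum.mono_neutral_right) (use finG[OF n1] GnS in auto)
    then show "i n x1 t = (\<Sum>\<delta>\<in>Gam (Suc n). (if \<delta> \<in> Gam n then a \<delta> else 0) * d \<delta> t)"
      using a by simp
  qed
  have xe: "x = (\<lambda>t. 1 * w t + (-1) * z t)" unfolding z_def by simp
  have "i (Suc n) x = (\<lambda>t. 1 * i (Suc n) w t + (-1) * i (Suc n) z t)"
    by (subst xe, rule lin[OF n1 sw sz])
  also have "\<dots> = (\<lambda>t. \<Sum>\<delta>\<in>Gam (Suc n). ((if \<delta> \<in> Gam n then a \<delta> else 0) - z \<delta>) * d \<delta> t)"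
    unfolding iw iz a' by (simp add: sum_subtractf left_diff_distrib)
  finally show ?case by (rule exI[of _ "\<lambda>\<delta>. (if \<delta> \<in> Gam n then a \<delta> else 0) - z \<delta>"])
qed

end

context bd begin

lemma dstar:
  assumes "\<eta> \<in> G'"
  shows "\<exists>F c. finite F \<and> F \<subseteq> G' \<and> (\<forall>\<delta>. (\<Sum>\<zeta>\<in>F. c \<zeta> * d \<delta> \<zeta>) = (if \<delta> = \<eta> then 1 else 0))"
proof -
  obtain F c where "finite F" "F \<subseteq> G'" "is_dstar Gam i \<eta> (\<lambda>x. \<Sum>h\<in>F. c h * x h)"
    using sd assms unfolding self_determined_def by blast
  then show ?thesis unfolding is_dstar_def by blast
qed

lemma coef_zero:
  assumes F: "finite F" and dual: "\<And>\<delta>. (\<Sum>\<zeta>\<in>F. c \<zeta> * d \<delta> \<zeta>) = (if \<delta> = \<eta> then 1 else 0)"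
    and z: "\<zeta> \<in> F" "\<zeta> \<noteq> \<eta>" "lev \<eta> \<le> lev \<zeta>"
  shows "c \<zeta> = 0"
proof (rule ccontr)
  assume cz: "c \<zeta> \<noteq> 0"
  define B where "B = {\<zeta>\<in>F. \<zeta> \<noteq> \<eta> \<and> lev \<eta> \<le> lev \<zeta> \<and> c \<zeta> \<noteq> 0}"
  have fB: "finite B" using F unfolding B_def by auto
  have nB: "\<zeta> \<in> B" using z cz unfolding B_def by auto
  define m where "m = Max (lev ` B)"
  have "m \<in> lev ` B" unfolding m_def using fB nB by (intro Max_in) auto
  then obtain \<zeta>0 where z0: "\<zeta>0 \<in> B" "lev \<zeta>0 = m" by auto
  have mge: "lev \<zeta>' \<le> m" if "\<zeta>' \<in> B" for \<zeta>' unfolding m_def using fB that by simp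
  have big: "c \<zeta>' = 0" if "\<zeta>' \<in> F" "m < lev \<zeta>'" for \<zeta>'
  proof (rule ccontr)
    assume "c \<zeta>' \<noteq> 0"
    moreover have "lev \<eta> \<le> lev \<zeta>0" using z0 unfolding B_def by auto
    ultimately have "\<zeta>' \<in> B" using that z0 unfolding B_def by auto
    then show False using mge that by fastforce
  qed
  have "(\<Sum>\<zeta>'\<in>F. c \<zeta>' * d \<zeta>0 \<zeta>') = (\<Sum>\<zeta>'\<in>F. if \<zeta>' = \<zeta>0 then c \<zeta>0 else 0)"
  proof (rule sum.cong)
    fix \<zeta>' assume zF: "\<zeta>' \<in> F"
    show "c \<zeta>' * d \<zeta>0 \<zeta>' = (if \<zeta>' = \<zeta>0 then c \<zeta>0 else 0)"
    proof (cases "\<zeta>' = \<zeta>0")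
      case True then show ?thesis by (simp add: d_self)
    next
      case False
      consider "lev \<zeta>' < lev \<zeta>0" | "lev \<zeta>' = lev \<zeta>0" | "lev \<zeta>0 < lev \<zeta>'" by linarith
      then show ?thesis
      proof cases
        case 1 then show ?thesis using False by (simp add: d_lower)
      next
        case 2 then show ?thesis using False by (simp add: d_same)
      next
        case 3 then show ?thesis using False big[OF zF] z0 by simp
      qed
    qed
  qed simp
  also have "\<dots> = c \<zeta>0" using z0 unfolding B_def by (simp add: sum.delta' F)
  finally have "(\<Sum>\<zeta>'\<in>F. c \<zeta>' * d \<zeta>0 \<zeta>') = c \<zeta>0" .
  moreover have "\<zeta>0 \<noteq> \<eta>" "c \<zeta>0 \<noteq> 0" using z0 unfolding B_def by auto
  ultimately show False using dual[of \<zeta>0] by simp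
qed

lemma sum_reduce:
  assumes F: "finite F" and dual: "\<And>\<delta>. (\<Sum>\<zeta>\<in>F. c \<zeta> * d \<delta> \<zeta>) = (if \<delta> = \<eta> then 1 else 0)"
    and low: "\<And>\<zeta>. \<zeta> \<in> F \<Longrightarrow> \<zeta> \<noteq> \<eta> \<Longrightarrow> lev \<zeta> < lev \<eta> \<Longrightarrow> c \<zeta> * x \<zeta> = 0"
  shows "(\<Sum>\<zeta>\<in>F. c \<zeta> * x \<zeta>) = (if \<eta> \<in> F then c \<eta> * x \<eta> else 0)"
proof -
  have "(\<Sum>\<zeta>\<in>F. c \<zeta> * x \<zeta>) = (\<Sum>\<zeta>\<in>F. if \<zeta> = \<eta> then c \<eta> * x \<eta> else 0)"
  proof (rule sum.cong)
    fix \<zeta> assume zF: "\<zeta> \<in> F"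
    show "c \<zeta> * x \<zeta> = (if \<zeta> = \<eta> then c \<eta> * x \<eta> else 0)"
    proof (cases "\<zeta> = \<eta>")
      case False
      show ?thesis
      proof (cases "lev \<zeta> < lev \<eta>")
        case True then show ?thesis using low zF False by simp
      next
        case le: False
        then show ?thesis using coef_zero[OF F dual zF False] False by simp
      qed
    qed simp
  qed simp
  also have "\<dots> = (if \<eta> \<in> F then c \<eta> * x \<eta> else 0)" by (simp add: sum.delta' F)
  finally show ?thesis .
qed

lemma coef_self:
  assumes F: "finite F" and dual: "\<And>\<delta>. (\<Sum>\<zeta>\<in>F. c \<zeta> * d \<delta> \<zeta>) = (if \<delta> = \<eta> then 1 else 0)"
  shows "\<eta> \<in> F \<and> c \<eta> = 1"
proof -
  have "(\<Sum>\<zeta>\<in>F. c \<zeta> * d \<eta> \<zeta>) = (if \<eta> \<in> F then c \<eta> * d \<eta> \<eta> else 0)"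
    by (rule sum_reduce[OF F dual]) (simp add: d_lower)
  then show ?thesis using dual[of \<eta>] by (simp add: d_self split: if_splits)
qed

lemma L: "\<eta> \<in> G' \<Longrightarrow> \<gamma> \<notin> G' \<Longrightarrow> d \<gamma> \<eta> = 0"
proof (induction "lev \<eta>" arbitrary: \<eta> rule: less_induct)
  case less
  obtain F c where F: "finite F" "F \<subseteq> G'"
    and dual: "\<And>\<delta>. (\<Sum>\<zeta>\<in>F. c \<zeta> * d \<delta> \<zeta>) = (if \<delta> = \<eta> then 1 else 0)"
    using dstar[OF less.prems(1)] by blast
  have cs: "\<eta> \<in> F" "c \<eta> = 1" using coef_self[OF F(1) dual] by auto
  have "(\<Sum>\<zeta>\<in>F. c \<zeta> * d \<gamma> \<zeta>) = (if \<eta> \<in> F then c \<eta> * d \<gamma> \<eta> else 0)"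
  proof (rule sum_reduce[OF F(1) dual])
    fix \<zeta> assume "\<zeta> \<in> F" "\<zeta> \<noteq> \<eta>" "lev \<zeta> < lev \<eta>"
    then show "c \<zeta> * d \<gamma> \<zeta> = 0" using less.hyps[of \<zeta>] F(2) less.prems by auto
  qed
  moreover have "\<gamma> \<noteq> \<eta>" using less.prems by auto
  ultimately show ?case using dual[of \<gamma>] cs by simp
qed

lemma d_fix:
  assumes q: "1 \<le> q" and lq: "lev \<gamma> \<le> q"
  shows "i q (restr (Gam q) (d \<gamma>)) = d \<gamma>"
proof (cases "lev \<gamma> < q")
  case True
  show ?thesis unfolding dvec_eq
    using compat[OF lev1 True supp_in_unit[OF levG]] by simp
next
  case False
  then have e: "lev \<gamma> = q" using lq by simp
  have "restr (Gam q) (d \<gamma>) = unit_vec \<gamma>"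
  proof
    fix t
    show "restr (Gam q) (d \<gamma>) t = unit_vec \<gamma> t"
    proof (cases "t \<in> Gam q")
      case True
      then show ?thesis unfolding restr_def dvec_eq e
        using ext[OF q supp_in_unit[OF levG[of \<gamma>, unfolded e]] True] by simp
    next
      case False
      then have "t \<noteq> \<gamma>" using levG[of \<gamma>] e by auto
      then show ?thesis using False unfolding restr_def unit_vec_def by simp
    qed
  qed
  then show ?thesis unfolding dvec_eq e by simp
qed

lemma part1a:
  assumes q: "1 \<le> q" and y: "supp_in (Gam q - G') y"
  shows "i q y \<in> lspan (d ` (Gam q - G'))"
proof -
  have yq: "supp_in (Gam q) y" using y unfolding supp_in_def by auto
  obtain a where a: "i q y = (\<lambda>t. \<Sum>\<delta>\<in>Gam q. a \<delta> * d \<delta> t)" using iq_span[OF q yq] by blast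
  have a0: "a \<delta> = 0" if dq: "\<delta> \<in> Gam q" and dG: "\<delta> \<in> G'" for \<delta>
  proof -
    obtain F c where F: "finite F" "F \<subseteq> G'"
      and dual: "\<And>\<delta>'. (\<Sum>\<zeta>\<in>F. c \<zeta> * d \<delta>' \<zeta>) = (if \<delta>' = \<delta> then 1 else 0)"
      using dstar[OF dG] by blast
    have "(\<Sum>\<zeta>\<in>F. c \<zeta> * i q y \<zeta>) = (\<Sum>\<zeta>\<in>F. c \<zeta> * (\<Sum>\<delta>'\<in>Gam q. a \<delta>' * d \<delta>' \<zeta>))"
      unfolding a by simp
    also have "\<dots> = (\<Sum>\<delta>'\<in>Gam q. a \<delta>' * (\<Sum>\<zeta>\<in>F. c \<zeta> * d \<delta>' \<zeta>))"
      by (simp add: sum_distrib_left sum.swap[of _ F] algebra_simps)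
    also have "\<dots> = (\<Sum>\<delta>'\<in>Gam q. if \<delta>' = \<delta> then a \<delta> else 0)"
      by (rule sum.cong) (auto simp: dual)
    also have "\<dots> = a \<delta>" using dq finG[OF q] by (simp add: sum.delta')
    finally have e1: "(\<Sum>\<zeta>\<in>F. c \<zeta> * i q y \<zeta>) = a \<delta>" .
    have ld: "lev \<delta> \<le> q" using lev_iff[OF q] dq by simp
    have "(\<Sum>\<zeta>\<in>F. c \<zeta> * i q y \<zeta>) = (if \<delta> \<in> F then c \<delta> * i q y \<delta> else 0)"
    proof (rule sum_reduce[OF F(1) dual])
      fix \<zeta> assume z: "\<zeta> \<in> F" "\<zeta> \<noteq> \<delta>" "lev \<zeta> < lev \<delta>"
      then have "\<zeta> \<in> Gam q" using lev_iff[OF q] ld by simp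
      then have "i q y \<zeta> = y \<zeta>" using ext[OF q yq] by simp
      also have "\<dots> = 0" using y z F(2) unfolding supp_in_def by auto
      finally show "c \<zeta> * i q y \<zeta> = 0" by simp
    qed
    also have "\<dots> = 0" using ext[OF q yq dq] y dG unfolding supp_in_def by auto
    finally show ?thesis using e1 by simp
  qed
  have "i q y = (\<lambda>t. \<Sum>\<delta>\<in>Gam q - G'. a \<delta> * d \<delta> t)"
  proof
    fix t
    have "(\<Sum>\<delta>\<in>Gam q. a \<delta> * d \<delta> t) = (\<Sum>\<delta>\<in>Gam q - G'. a \<delta> * d \<delta> t)"
      by (rule sum.mono_neutral_right) (use finG[OF q] a0 in auto)
    then show "i q y t = (\<Sum>\<delta>\<in>Gam q - G'. a \<delta> * d \<delta> t)" using a by simp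
  qed
  then show ?thesis unfolding lspan_image using finG[OF q] by blast
qed

lemma part1b:
  assumes q: "1 \<le> q" and x: "x \<in> lspan (d ` (Gam q - G'))"
  shows "x \<in> i q ` {y. supp_in (Gam q - G') y}"
proof -
  obtain G a where G: "finite G" "G \<subseteq> Gam q - G'" "x = (\<lambda>t. \<Sum>\<gamma>\<in>G. a \<gamma> * d \<gamma> t)"
    using x unfolding lspan_image by blast
  define y where "y = (\<lambda>t. \<Sum>\<gamma>\<in>G. a \<gamma> * restr (Gam q) (d \<gamma>) t)"
  have sy: "supp_in (Gam q - G') y"
    unfolding supp_in_def y_def restr_def using G(2) L by (auto intro!: sum.neutral)
  have "i q y = (\<lambda>t. \<Sum>\<gamma>\<in>G. a \<gamma> * i q (restr (Gam q) (d \<gamma>)) t)"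
    unfolding y_def by (rule i_sum[OF q G(1) supp_in_restr])
  also have "\<dots> = x"
  proof -
    have "i q (restr (Gam q) (d \<gamma>)) = d \<gamma>" if "\<gamma> \<in> G" for \<gamma>
      using G(2) that lev_iff[OF q, of \<gamma>] d_fix[OF q, of \<gamma>] by auto
    then show ?thesis unfolding G(3) by (auto intro!: sum.cong)
  qed
  finally show ?thesis using sy by blast
qed

lemma part1:
  "1 \<le> q \<Longrightarrow> i q ` {x. supp_in (Gam q - G') x} = lspan (d ` (Gam q - G'))"
  using part1a part1b by blast

end

lemma bounded_comb:
  assumes "bounded_fn x" "bounded_fn y"
  shows "bounded_fn (\<lambda>g. a * x g + b * y g)"
proof -
  obtain Mx My where M: "\<And>g. \<bar>x g\<bar> \<le> Mx" "\<And>g. \<bar>y g\<bar> \<le> My"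
    using assms unfolding bounded_fn_def by blast
  have "\<bar>a * x g + b * y g\<bar> \<le> \<bar>a\<bar> * Mx + \<bar>b\<bar> * My" for g
  proof -
    have "\<bar>a * x g + b * y g\<bar> \<le> \<bar>a\<bar> * \<bar>x g\<bar> + \<bar>b\<bar> * \<bar>y g\<bar>"
      by (metis abs_mult abs_triangle_ineq)
    also have "\<dots> \<le> \<bar>a\<bar> * Mx + \<bar>b\<bar> * My"
      using M[of g] by (intro add_mono mult_left_mono) auto
    finally show ?thesis .
  qed
  then show ?thesis by (rule bounded_fnI)
qed

lemma bounded_sum:
  assumes "finite A" "\<And>a. a \<in> A \<Longrightarrow> bounded_fn (f a)"
  shows "bounded_fn (\<lambda>g. \<Sum>a\<in>A. c a * f a g)"
  using assms
proof (induction A rule: finite_induct)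
  case empty then show ?case by (auto intro: bounded_fnI[of _ 0])
next
  case (insert a A)
  have "bounded_fn (\<lambda>g. c a * f a g + 1 * (\<Sum>a\<in>A. c a * f a g))"
    by (rule bounded_comb) (use insert in auto)
  then show ?case using insert by simp
qed

context bd begin

definition Cb where "Cb = (SOME C. \<forall>q\<ge>1. \<forall>x. supp_in (Gam q) x \<longrightarrow> supnorm (i q x) \<le> C * supnorm x)"

lemma Cb: "1 \<le> q \<Longrightarrow> supp_in (Gam q) x \<Longrightarrow> supnorm (i q x) \<le> Cb * supnorm x"
  using someI_ex[OF bnd] unfolding Cb_def by blast

lemma Cb1: "1 \<le> Cb"
proof -
  obtain \<gamma> where g: "\<gamma> \<in> Gam 1" using fin[of 1] by auto
  have su: "supp_in (Gam 1) (unit_vec \<gamma>)" by (rule supp_in_unit[OF g])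
  have ub: "\<bar>unit_vec \<gamma> t\<bar> \<le> 1" for t unfolding unit_vec_def by auto
  have s1: "supnorm (unit_vec \<gamma>) \<le> 1" by (rule sup_le[OF ub])
  have s0: "0 \<le> supnorm (unit_vec \<gamma>)" by (rule sup_nonneg[OF bounded_fnI[OF ub]])
  have "1 = \<bar>i 1 (unit_vec \<gamma>) \<gamma>\<bar>" using ext[OF _ su g] by (simp add: unit_vec_def)
  also have "\<dots> \<le> supnorm (i 1 (unit_vec \<gamma>))" by (rule sup_ge[OF bddval[OF _ su]]) simp
  also have "\<dots> \<le> Cb * supnorm (unit_vec \<gamma>)" by (rule Cb[OF _ su]) simp
  finally have c: "1 \<le> Cb * supnorm (unit_vec \<gamma>)" .
  show ?thesis
  proof (rule ccontr)
    assume "\<not> 1 \<le> Cb"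
    then have "Cb * supnorm (unit_vec \<gamma>) < 1"
    proof (cases "Cb \<le> 0")
      case True
      then have "Cb * supnorm (unit_vec \<gamma>) \<le> 0" using s0 by (rule mult_nonpos_nonneg)
      then show ?thesis by simp
    next
      case False
      then have "Cb * supnorm (unit_vec \<gamma>) \<le> Cb * 1" using s1 by (intro mult_left_mono) auto
      then show ?thesis using \<open>\<not> 1 \<le> Cb\<close> by simp
    qed
    then show False using c by simp
  qed
qed

lemma i_bound:
  assumes "1 \<le> q" "supp_in (Gam q) x" "\<And>t. \<bar>x t\<bar> \<le> M"
  shows "\<bar>i q x g\<bar> \<le> Cb * M"
proof -
  have "\<bar>i q x g\<bar> \<le> supnorm (i q x)" by (rule sup_ge[OF bddval[OF assms(1,2)]])
  also have "\<dots> \<le> Cb * supnorm x" by (rule Cb[OF assms(1,2)])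
  also have "\<dots> \<le> Cb * M" using Cb1 sup_le[OF assms(3)] by (intro mult_left_mono) auto
  finally show ?thesis .
qed

lemma d_bounded: "bounded_fn (d \<gamma>)"
  unfolding dvec_eq by (rule bddval[OF lev1 supp_in_unit[OF levG]])

abbreviation LS where "LS \<equiv> lspan (d ` (UNIV - G'))"
abbreviation Y where "Y \<equiv> supclosure LS"

lemma LS_bounded: "x \<in> LS \<Longrightarrow> bounded_fn x"
  unfolding lspan_image using bounded_sum d_bounded by blast

lemma LS_Y: "x \<in> LS \<Longrightarrow> x \<in> Y"
  unfolding supclosure_def using LS_bounded by force

lemma LS_vanish: "x \<in> LS \<Longrightarrow> \<eta> \<in> G' \<Longrightarrow> x \<eta> = 0"
  unfolding lspan_image using L by (auto intro!: sum.neutral)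

lemma Y_vanish:
  assumes x: "x \<in> Y" and eta: "\<eta> \<in> G'"
  shows "x \<eta> = 0"
proof (rule ccontr)
  assume ne: "x \<eta> \<noteq> 0"
  then have "0 < \<bar>x \<eta>\<bar> / 2" by simp
  then obtain y where "y \<in> LS" "\<forall>g. \<bar>x g - y g\<bar> \<le> \<bar>x \<eta>\<bar> / 2"
    using x unfolding supclosure_def by blast
  then have "y \<eta> = 0" "\<bar>x \<eta> - y \<eta>\<bar> \<le> \<bar>x \<eta>\<bar> / 2" using LS_vanish eta by auto
  then have "\<bar>x \<eta>\<bar> \<le> \<bar>x \<eta>\<bar> / 2" by simp
  then show False using ne by simp
qed

lemma Y_comb:
  assumes x: "x \<in> Y" and y: "y \<in> Y"
  shows "(\<lambda>g. a * x g + b * y g) \<in> Y"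
proof -
  have bx: "bounded_fn x" and bY: "bounded_fn y" using x y unfolding supclosure_def by auto
  have "\<exists>z\<in>LS. \<forall>g. \<bar>a * x g + b * y g - z g\<bar> \<le> e" if e: "0 < e" for e
  proof -
    define e' where "e' = e / (\<bar>a\<bar> + \<bar>b\<bar> + 1)"
    have e': "0 < e'" unfolding e'_def using e by (simp add: add_nonneg_pos)
    obtain x' where x': "x' \<in> LS" "\<forall>g. \<bar>x g - x' g\<bar> \<le> e'" using x e' unfolding supclosure_def by blast
    obtain y' where y': "y' \<in> LS" "\<forall>g. \<bar>y g - y' g\<bar> \<le> e'" using y e' unfolding supclosure_def by blast
    have "\<bar>a * x g + b * y g - (a * x' g + b * y' g)\<bar> \<le> e" for g
    proof -
      have "\<bar>a * x g + b * y g - (a * x' g + b * y' g)\<bar> = \<bar>a * (x g - x' g) + b * (y g - y' g)\<bar>"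
        by (simp add: algebra_simps)
      also have "\<dots> \<le> \<bar>a\<bar> * \<bar>x g - x' g\<bar> + \<bar>b\<bar> * \<bar>y g - y' g\<bar>"
        by (metis abs_mult abs_triangle_ineq)
      also have "\<dots> \<le> \<bar>a\<bar> * e' + \<bar>b\<bar> * e'"
        using x'(2) y'(2) by (intro add_mono mult_left_mono) auto
      also have "\<dots> \<le> (\<bar>a\<bar> + \<bar>b\<bar> + 1) * e'" using e' by (simp add: algebra_simps)
      also have "\<dots> = e" unfolding e'_def by (simp add: add_nonneg_pos)
      finally show ?thesis .
    qed
    moreover have "(\<lambda>g. a * x' g + b * y' g) \<in> LS" by (rule lspan_comb[OF x'(1) y'(1)])
    ultimately show ?thesis by (intro bexI[of _ "\<lambda>g. a * x' g + b * y' g"]) auto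
  qed
  then show ?thesis unfolding supclosure_def using bounded_comb[OF bx bY] by blast
qed

lemma Y_zero: "(\<lambda>g. 0) \<in> Y" by (rule LS_Y[OF lspan_zero])

lemma Y_sum:
  assumes "finite A" "\<And>a. a \<in> A \<Longrightarrow> f a \<in> Y"
  shows "(\<lambda>g. \<Sum>a\<in>A. c a * f a g) \<in> Y"
  using assms
proof (induction A rule: finite_induct)
  case empty then show ?case using Y_zero by simp
next
  case (insert a A)
  have "(\<lambda>g. c a * f a g + 1 * (\<Sum>a\<in>A. c a * f a g)) \<in> Y"
    by (rule Y_comb) (use insert in auto)
  then show ?case using insert by simp
qed

lemma restrY: "x \<in> Y \<Longrightarrow> supp_in (Gam q - G') (restr (Gam q) x)"
  unfolding supp_in_def restr_def using Y_vanish by auto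

lemma uY: "1 \<le> q \<Longrightarrow> x \<in> Y \<Longrightarrow> i q (restr (Gam q) x) \<in> Y"
  using part1a[OF _ restrY] lspan_mono[of "d ` (Gam q - G')" "d ` (UNIV - G')"] LS_Y by blast

lemma Q_approx:
  assumes x: "x \<in> Y" and e: "0 < e"
  shows "\<exists>q0\<ge>1. \<forall>q\<ge>q0. \<forall>g. \<bar>i q (restr (Gam q) x) g - x g\<bar> \<le> e"
proof -
  define e' where "e' = e / (Cb + 1)"
  have e': "0 < e'" unfolding e'_def using e Cb1 by simp
  obtain s where s: "s \<in> LS" "\<forall>g. \<bar>x g - s g\<bar> \<le> e'" using x e' unfolding supclosure_def by blast
  obtain G a where G: "finite G" "G \<subseteq> UNIV - G'" "s = (\<lambda>t. \<Sum>\<gamma>\<in>G. a \<gamma> * d \<gamma> t)"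
    using s(1) unfolding lspan_image by blast
  define q0 where "q0 = Max (insert 1 (lev ` G))"
  have "\<forall>g. \<bar>i q (restr (Gam q) x) g - x g\<bar> \<le> e" if qq: "q0 \<le> q" for q
  proof
    fix g
    have q: "1 \<le> q" using qq G(1) unfolding q0_def by (meson Max_ge finite_imageI finite_insert insertI1 order.trans)
    have lq: "lev \<gamma> \<le> q" if "\<gamma> \<in> G" for \<gamma>
      using qq G(1) that unfolding q0_def by (meson Max_ge finite_imageI finite_insert insertCI image_eqI order.trans)
    have rs: "restr (Gam q) s = (\<lambda>t. \<Sum>\<gamma>\<in>G. a \<gamma> * restr (Gam q) (d \<gamma>) t)"
      unfolding G(3) restr_def by auto
    have fx: "i q (restr (Gam q) s) = s"
    proof -
      have "i q (restr (Gam q) s) = (\<lambda>t. \<Sum>\<gamma>\<in>G. a \<gamma> * i q (restr (Gam q) (d \<gamma>)) t)"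
        unfolding rs by (rule i_sum[OF q G(1) supp_in_restr])
      also have "\<dots> = s" unfolding G(3) using d_fix[OF q lq] by (auto intro!: sum.cong)
      finally show ?thesis .
    qed
    have "\<bar>i q (restr (Gam q) x) g - i q (restr (Gam q) s) g\<bar> \<le> Cb * e'"
    proof -
      have "i q (restr (Gam q) x) g - i q (restr (Gam q) s) g
          = i q (\<lambda>t. restr (Gam q) x t - restr (Gam q) s t) g"
        by (rule i_diff[OF q supp_in_restr supp_in_restr])
      also have "\<bar>\<dots>\<bar> \<le> Cb * e'"
      proof (rule i_bound[OF q])
        show "supp_in (Gam q) (\<lambda>t. restr (Gam q) x t - restr (Gam q) s t)"
          unfolding supp_in_def restr_def by auto
        show "\<bar>restr (Gam q) x t - restr (Gam q) s t\<bar> \<le> e'" for t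
          using s(2) e' unfolding restr_def by auto
      qed
      finally show ?thesis .
    qed
    then have "\<bar>i q (restr (Gam q) x) g - s g\<bar> \<le> Cb * e'" using fx by simp
    moreover have "\<bar>s g - x g\<bar> \<le> e'" using s(2) by (simp add: abs_minus_commute)
    ultimately have "\<bar>i q (restr (Gam q) x) g - x g\<bar> \<le> Cb * e' + e'" by linarith
    also have "\<dots> = (Cb + 1) * e'" by (simp add: algebra_simps)
    also have "\<dots> = e" unfolding e'_def using Cb1 by simp
    finally show "\<bar>i q (restr (Gam q) x) g - x g\<bar> \<le> e" .
  qed
  moreover have "1 \<le> q0" unfolding q0_def using G(1) by simp
  ultimately show ?thesis by blast
qed

end

context bd begin

lemma part2: "Linf_space Y"
  unfolding Linf_space_def
proof (intro exI[of _ "4 * Cb"] allI impI, elim conjE)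
  fix E :: "('a \<Rightarrow> real) set"
  assume fE: "fin_dim_subspace E" and EY: "E \<subseteq> Y"
  obtain B where B: "finite B" "E = lspan B" using fE unfolding fin_dim_subspace_def by blast
  have BY: "v \<in> Y" if "v \<in> B" for v using EY B(2) lspan_base[OF that] by blast
  obtain D h K where PR: "finite D \<and> 0 \<le> K \<and>
    (\<forall>v\<in>B. \<forall>x y a b. h v (\<lambda>g. a * x g + b * y g) = a * h v x + b * h v y) \<and>
    (\<forall>v\<in>B. \<forall>x y. (\<forall>\<delta>\<in>D. x \<delta> = y \<delta>) \<longrightarrow> h v x = h v y) \<and>
    (\<forall>v\<in>B. \<forall>x M. 0 \<le> M \<longrightarrow> (\<forall>\<delta>\<in>D. \<bar>x \<delta>\<bar> \<le> M) \<longrightarrow> \<bar>h v x\<bar> \<le> K * M) \<and>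
    (\<forall>x\<in>lspan B. x = (\<lambda>g. \<Sum>v\<in>B. h v x * v g))"
    using proj[OF B(1)] by (elim exE)
  have D: "finite D" and K: "0 \<le> K" using PR by blast+
  have hlin: "\<And>v x y a b. v \<in> B \<Longrightarrow> h v (\<lambda>g. a * x g + b * y g) = a * h v x + b * h v y"
    using PR by blast
  have hloc: "\<And>v x y. v \<in> B \<Longrightarrow> (\<forall>\<delta>\<in>D. x \<delta> = y \<delta>) \<Longrightarrow> h v x = h v y"
    using PR by blast
  have hbd: "\<And>v x M. v \<in> B \<Longrightarrow> 0 \<le> M \<Longrightarrow> (\<forall>\<delta>\<in>D. \<bar>x \<delta>\<bar> \<le> M) \<Longrightarrow> \<bar>h v x\<bar> \<le> K * M"
    using PR by blast
  have hrep: "\<And>x. x \<in> lspan B \<Longrightarrow> x = (\<lambda>g. \<Sum>v\<in>B. h v x * v g)"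
    using PR by blast
  define eps where "eps = 1 / (2 * (K + 1) * (real (card B) + 1))"
  have eps: "0 < eps" unfolding eps_def using K by simp
  have "\<forall>v\<in>B. \<exists>q0. 1 \<le> q0 \<and> (\<forall>q\<ge>q0. \<forall>g. \<bar>i q (restr (Gam q) v) g - v g\<bar> \<le> eps)"
    using Q_approx[OF BY eps] by blast
  then obtain q0 where q0: "\<And>v. v \<in> B \<Longrightarrow> 1 \<le> q0 v \<and> (\<forall>q\<ge>q0 v. \<forall>g. \<bar>i q (restr (Gam q) v) g - v g\<bar> \<le> eps)"
    by metis
  define q where "q = Max (insert 1 (q0 ` B \<union> lev ` D))"
  have fQ: "finite (insert 1 (q0 ` B \<union> lev ` D))" using B(1) D by simp
  have q: "1 \<le> q" unfolding q_def using fQ by simp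
  have qB: "q0 v \<le> q" if "v \<in> B" for v unfolding q_def using fQ that by (intro Max_ge) auto
  have qD: "\<delta> \<in> Gam q" if "\<delta> \<in> D" for \<delta>
  proof -
    have "lev \<delta> \<le> q" unfolding q_def using fQ that by (intro Max_ge) auto
    then show ?thesis using lev_iff[OF q] by simp
  qed
  define u where "u v = i q (restr (Gam q) v)" for v
  have uapp: "\<bar>u v g - v g\<bar> \<le> eps" if "v \<in> B" for v g
    using q0[OF that] qB[OF that] unfolding u_def by blast
  have uYY: "u v \<in> Y" if "v \<in> B" for v unfolding u_def by (rule uY[OF q BY[OF that]])
  define A where "A = Gam q - G'"
  have fA: "finite A" unfolding A_def using finG[OF q] by simp
  have AG: "A \<subseteq> Gam q" unfolding A_def by auto
  define n where "n = card A"
  obtain enum where enum: "bij_betw enum {0..<n} A"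
    using ex_bij_betw_nat_finite[OF fA] unfolding n_def by blast
  have enumA: "k < n \<Longrightarrow> enum k \<in> A" for k using enum unfolding bij_betw_def by auto
  have enum_inj: "k < n \<Longrightarrow> k' < n \<Longrightarrow> enum k = enum k' \<Longrightarrow> k = k'" for k k'
    using enum unfolding bij_betw_def inj_on_def by auto
  define emb where "emb w = (\<lambda>g. \<Sum>k\<in>{0..<n}. w k * unit_vec (enum k) g)" for w :: "nat \<Rightarrow> real"
  define S where "S y = (\<lambda>g. y g + (\<Sum>v\<in>B. h v y * (v g - u v g)))" for y
  define Psi where "Psi w = S (i q (emb w))" for w
  define V where "V = {w::nat \<Rightarrow> real. \<forall>k\<ge>n. w k = 0}"
  have sembA: "supp_in A (emb w)" for w
    unfolding emb_def by (rule supp_in_sum) (rule supp_in_unit[OF enumA], simp)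
  have semb: "supp_in (Gam q) (emb w)" for w
    using sembA[of w] AG unfolding supp_in_def by auto
  have emb_lin: "emb (\<lambda>k. s * w1 k + t * w2 k) = (\<lambda>g. s * emb w1 g + t * emb w2 g)" for s t w1 w2
    unfolding emb_def by (simp add: sum.distrib sum_distrib_left algebra_simps)
  have emb_val: "emb w (enum k) = w k" if "k < n" for w k
  proof -
    have "emb w (enum k) = (\<Sum>k'\<in>{0..<n}. if k' = k then w k else 0)"
      unfolding emb_def unit_vec_def using enum_inj that by (intro sum.cong) auto
    also have "\<dots> = w k" using that by simp
    finally show ?thesis .
  qed
  have emb_bd: "\<bar>emb w g\<bar> \<le> M" if "\<And>k. \<bar>w k\<bar> \<le> M" "0 \<le> M" for w g M
  proof (cases "\<exists>k<n. g = enum k")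
    case True
    then obtain k where "k < n" "g = enum k" by blast
    then show ?thesis using emb_val that by simp
  next
    case False
    then have "emb w g = 0" unfolding emb_def unit_vec_def by (auto intro!: sum.neutral)
    then show ?thesis using that by simp
  qed
  have S_lin: "S (\<lambda>g. s * y1 g + t * y2 g) = (\<lambda>g. s * S y1 g + t * S y2 g)" for s t y1 y2
  proof
    fix g
    have "(\<Sum>v\<in>B. h v (\<lambda>g. s * y1 g + t * y2 g) * (v g - u v g))
        = (\<Sum>v\<in>B. s * (h v y1 * (v g - u v g)) + t * (h v y2 * (v g - u v g)))"
      by (rule sum.cong) (auto simp: hlin algebra_simps)
    also have "\<dots> = s * (\<Sum>v\<in>B. h v y1 * (v g - u v g)) + t * (\<Sum>v\<in>B. h v y2 * (v g - u v g))"
      by (simp add: sum.distrib sum_distrib_left)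
    finally show "S (\<lambda>g. s * y1 g + t * y2 g) g = s * S y1 g + t * S y2 g"
      unfolding S_def by (simp add: algebra_simps)
  qed
  have Psi_lin: "Psi (\<lambda>k. s * w1 k + t * w2 k) = (\<lambda>g. s * Psi w1 g + t * Psi w2 g)" for s t w1 w2
    unfolding Psi_def emb_lin lin[OF q semb semb] S_lin ..
  have Psi0: "Psi (\<lambda>k. 0) = (\<lambda>g. 0)"
    using Psi_lin[of 0 "\<lambda>k. 0" 0 "\<lambda>k. 0"] by simp
  have Psi_sum: "Psi (\<lambda>j. \<Sum>k\<in>G. c k * f k j) = (\<lambda>g. \<Sum>k\<in>G. c k * Psi (f k) g)" if "finite G" for G c f
    using that
  proof (induction G rule: finite_induct)
    case empty then show ?case using Psi0 by simp
  next
    case (insert k G)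
    have "Psi (\<lambda>j. c k * f k j + 1 * (\<Sum>k\<in>G. c k * f k j)) = (\<lambda>g. c k * Psi (f k) g + 1 * Psi (\<lambda>j. \<Sum>k\<in>G. c k * f k j) g)"
      by (rule Psi_lin)
    then show ?case using insert by simp
  qed
  have est: "supnorm w \<le> 2 * supnorm (Psi w) \<and> supnorm (Psi w) \<le> 2 * Cb * supnorm w \<and> bounded_fn w \<and> bounded_fn (Psi w)"
    if wV: "w \<in> V" for w
  proof -
    define y where "y = i q (emb w)"
    have by0: "bounded_fn y" unfolding y_def by (rule bddval[OF q semb])
    define My where "My = supnorm y"
    have My0: "0 \<le> My" unfolding My_def by (rule sup_nonneg[OF by0])
    have yle: "\<bar>y g\<bar> \<le> My" for g unfolding My_def by (rule sup_ge[OF by0])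
    have n1: "\<bar>w k\<bar> \<le> My" for k
    proof (cases "k < n")
      case True
      have "w k = emb w (enum k)" using emb_val[OF True] by simp
      also have "\<dots> = y (enum k)" unfolding y_def using ext[OF q semb] enumA[OF True] AG by auto
      finally show ?thesis using yle by simp
    next
      case False then show ?thesis using wV My0 unfolding V_def by auto
    qed
    have bw: "bounded_fn w" by (rule bounded_fnI[OF n1])
    have n2: "supnorm w \<le> My" by (rule sup_le[OF n1])
    have sw0: "0 \<le> supnorm w" by (rule sup_nonneg[OF bw])
    have n3: "My \<le> Cb * supnorm w"
      unfolding My_def
    proof (rule sup_le)
      fix g show "\<bar>y g\<bar> \<le> Cb * supnorm w" unfolding y_def
        by (rule i_bound[OF q semb]) (rule emb_bd[OF sup_ge[OF bw] sw0])
    qed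
    have n4: "\<bar>S y g - y g\<bar> \<le> My / 2" for g
    proof -
      have "\<bar>S y g - y g\<bar> = \<bar>\<Sum>v\<in>B. h v y * (v g - u v g)\<bar>" unfolding S_def by simp
      also have "\<dots> \<le> (\<Sum>v\<in>B. \<bar>h v y * (v g - u v g)\<bar>)" by (rule sum_abs)
      also have "\<dots> \<le> (\<Sum>v\<in>B. K * My * eps)"
      proof (rule sum_mono)
        fix v assume v: "v \<in> B"
        have "\<bar>h v y\<bar> \<le> K * My" using hbd[OF v My0] yle by auto
        moreover have "\<bar>v g - u v g\<bar> \<le> eps" using uapp[OF v] by (simp add: abs_minus_commute)
        ultimately show "\<bar>h v y * (v g - u v g)\<bar> \<le> K * My * eps"
          unfolding abs_mult by (intro mult_mono) (auto simp: K My0)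
      qed
      also have "\<dots> = (real (card B) * K * eps) * My" by simp
      also have "\<dots> \<le> (1 / 2) * My"
      proof (rule mult_right_mono[OF _ My0])
        have "real (card B) * K \<le> (K + 1) * (real (card B) + 1)" using K by (simp add: algebra_simps)
        then have "real (card B) * K / (2 * (K + 1) * (real (card B) + 1)) \<le> (K + 1) * (real (card B) + 1) / (2 * (K + 1) * (real (card B) + 1))"
          using K by (intro divide_right_mono) auto
        also have "\<dots> = 1 / 2"
        proof -
          have xp: "(K + 1) * (real (card B) + 1) \<noteq> 0" using K by simp
          show ?thesis using xp by (simp add: mult.assoc)
        qed
        finally show "real (card B) * K * eps \<le> 1 / 2" unfolding eps_def by simp
      qed
      finally show ?thesis by simp
    qed
    have Py: "Psi w = S y" unfolding Psi_def y_def ..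
    have n5: "\<bar>Psi w g\<bar> \<le> 2 * Cb * supnorm w" for g
    proof -
      have "\<bar>S y g\<bar> \<le> \<bar>y g\<bar> + My / 2" using n4[of g] by linarith
      also have "\<dots> \<le> 2 * My" using yle[of g] My0 by linarith
      also have "\<dots> \<le> 2 * Cb * supnorm w" using n3 by linarith
      finally show ?thesis using Py by simp
    qed
    have bP: "bounded_fn (Psi w)" by (rule bounded_fnI[OF n5])
    have n6: "My \<le> 2 * supnorm (Psi w)"
    proof -
      have "My \<le> supnorm (Psi w) + My / 2" unfolding My_def
      proof (rule sup_le)
        fix g
        have "\<bar>y g\<bar> \<le> \<bar>S y g\<bar> + \<bar>S y g - y g\<bar>" using abs_triangle_ineq4[of "S y g" "S y g - y g"] by simp
        then have "\<bar>y g\<bar> \<le> \<bar>Psi w g\<bar> + My / 2" using n4[of g] Py by simp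
        also have "\<dots> \<le> supnorm (Psi w) + My / 2" using sup_ge[OF bP] by simp
        finally show "\<bar>y g\<bar> \<le> supnorm (Psi w) + supnorm y / 2" unfolding My_def .
      qed
      then show ?thesis by simp
    qed
    show ?thesis using n2 n6 sup_le[OF n5] bw bP by auto
  qed
  have combV: "(\<lambda>k. s * w1 k + t * w2 k) \<in> V" if "w1 \<in> V" "w2 \<in> V" for s t w1 w2
    using that unfolding V_def by auto
  have inj: "inj_on Psi V"
  proof (rule inj_onI)
    fix w1 w2 assume w: "w1 \<in> V" "w2 \<in> V" "Psi w1 = Psi w2"
    define w' where "w' = (\<lambda>k. 1 * w1 k + (-1) * w2 k)"
    have w'V: "w' \<in> V" unfolding w'_def by (rule combV[OF w(1,2)])
    have "Psi w' = (\<lambda>g. 0)" unfolding w'_def Psi_lin using w(3) by simp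
    then have "supnorm (Psi w') \<le> 0" by (intro sup_le) simp
    then have s: "supnorm w' \<le> 0" using est[OF w'V] by linarith
    have "\<bar>w' k\<bar> \<le> 0" for k using sup_ge[of w' k] est[OF w'V] s by linarith
    then show "w1 = w2" unfolding w'_def by (auto simp: fun_eq_iff)
  qed
  define F where "F = Psi ` V"
  define T where "T = inv_into V Psi"
  have bijP: "bij_betw Psi V F" unfolding F_def using inj by (simp add: bij_betw_imageI)
  have bijT: "bij_betw T F V" unfolding T_def by (rule bij_betw_inv_into[OF bijP])
  have TP: "T (Psi w) = w" if "w \<in> V" for w unfolding T_def by (rule inv_into_f_f[OF inj that])
  have Tlin: "T (\<lambda>g. s * x g + t * y g) = (\<lambda>k. s * T x k + t * T y k)" if xyF: "x \<in> F" "y \<in> F" for x y s t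
  proof -
    obtain w1 w2 where w: "w1 \<in> V" "w2 \<in> V" "x = Psi w1" "y = Psi w2" using xyF unfolding F_def by blast
    have "(\<lambda>g. s * x g + t * y g) = Psi (\<lambda>k. s * w1 k + t * w2 k)" unfolding w Psi_lin ..
    then show ?thesis using TP[OF combV[OF w(1,2)]] TP[OF w(1)] TP[OF w(2)] w by simp
  qed
  have iso: "linfty_iso (4 * Cb) F"
    unfolding linfty_iso_def
    apply (rule exI[of _ n], rule exI[of _ T], rule exI[of _ "2::real"], rule exI[of _ "2 * Cb"])
    apply (intro conjI)
    subgoal using bijT unfolding V_def .
    subgoal using Tlin by blast
    subgoal by simp
    subgoal using TP est unfolding F_def by auto
    subgoal using TP est unfolding F_def by auto
    done
  have fd: "fin_dim_subspace F"
    unfolding fin_dim_subspace_def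
  proof (intro exI[of _ "(\<lambda>k. Psi (unit_vec k)) ` {0..<n}"] conjI)
    show "finite ((\<lambda>k. Psi (unit_vec k)) ` {0..<n})" by simp
    show "F = lspan ((\<lambda>k. Psi (unit_vec k)) ` {0..<n})"
    proof
      show "F \<subseteq> lspan ((\<lambda>k. Psi (unit_vec k)) ` {0..<n})"
      proof
        fix x assume "x \<in> F"
        then obtain w where w: "w \<in> V" "x = Psi w" unfolding F_def by blast
        have "w = (\<lambda>j. \<Sum>k\<in>{0..<n}. w k * unit_vec k j)"
        proof
          fix j
          have "(\<Sum>k\<in>{0..<n}. w k * unit_vec k j) = (\<Sum>k\<in>{0..<n}. if k = j then w j else 0)"
            unfolding unit_vec_def by (intro sum.cong) auto
          also have "\<dots> = w j" using w(1) unfolding V_def by auto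
          finally show "w j = (\<Sum>k\<in>{0..<n}. w k * unit_vec k j)" by simp
        qed
        then have "x = (\<lambda>g. \<Sum>k\<in>{0..<n}. w k * Psi (unit_vec k) g)"
          using w(2) Psi_sum[of "{0..<n}" w unit_vec] by simp
        then show "x \<in> lspan ((\<lambda>k. Psi (unit_vec k)) ` {0..<n})"
          unfolding lspan_image by blast
      qed
    next
      show "lspan ((\<lambda>k. Psi (unit_vec k)) ` {0..<n}) \<subseteq> F"
      proof
        fix x assume "x \<in> lspan ((\<lambda>k. Psi (unit_vec k)) ` {0..<n})"
        then obtain G a where G: "finite G" "G \<subseteq> {0..<n}" "x = (\<lambda>t. \<Sum>k\<in>G. a k * Psi (unit_vec k) t)"
          unfolding lspan_image by blast
        have "x = Psi (\<lambda>j. \<Sum>k\<in>G. a k * unit_vec k j)" using G Psi_sum[of G a unit_vec] by simp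
        moreover have "(\<lambda>j. \<Sum>k\<in>G. a k * unit_vec k j) \<in> V"
          unfolding V_def unit_vec_def using G(2) by (auto intro!: sum.neutral)
        ultimately show "x \<in> F" unfolding F_def by blast
      qed
    qed
  qed
  have EF: "E \<subseteq> F"
  proof
    fix x assume "x \<in> E"
    then have xB: "x \<in> lspan B" using B(2) by simp
    define y0 where "y0 = (\<lambda>g. \<Sum>v\<in>B. h v x * restr (Gam q) v g)"
    have sy0: "supp_in A y0" unfolding y0_def A_def by (rule supp_in_sum) (rule restrY[OF BY])
    define w where "w = (\<lambda>k. if k < n then y0 (enum k) else 0)"
    have wV: "w \<in> V" unfolding w_def V_def by auto
    have ew: "emb w = y0"
    proof
      fix g
      have "emb w g = (\<Sum>k\<in>{0..<n}. y0 (enum k) * unit_vec (enum k) g)"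
        unfolding emb_def w_def by (intro sum.cong) auto
      also have "\<dots> = (\<Sum>a\<in>A. y0 a * unit_vec a g)"
        by (rule sum.reindex_bij_betw[OF enum, of "\<lambda>a. y0 a * unit_vec a g"])
      also have "\<dots> = y0 g" using unit_expand[OF sy0 fA] by metis
      finally show "emb w g = y0 g" .
    qed
    have sy0q: "supp_in (Gam q) y0" using sy0 AG unfolding supp_in_def by auto
    have iy0: "i q y0 = (\<lambda>g. \<Sum>v\<in>B. h v x * u v g)"
      unfolding y0_def u_def by (rule i_sum[OF q B(1) supp_in_restr])
    have hh: "h v (i q y0) = h v x" if v: "v \<in> B" for v
    proof (rule hloc[OF v], rule ballI)
      fix \<delta> assume "\<delta> \<in> D"
      then have dq: "\<delta> \<in> Gam q" by (rule qD)
      have "i q y0 \<delta> = y0 \<delta>" by (rule ext[OF q sy0q dq])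
      also have "\<dots> = (\<Sum>v\<in>B. h v x * v \<delta>)" unfolding y0_def restr_def using dq by simp
      also have "\<dots> = x \<delta>" using hrep[OF xB] by metis
      finally show "i q y0 \<delta> = x \<delta>" .
    qed
    have "Psi w = x"
    proof
      fix g
      have e1: "Psi w g = i q y0 g + (\<Sum>v\<in>B. h v (i q y0) * (v g - u v g))"
        unfolding Psi_def ew S_def ..
      have e2: "(\<Sum>v\<in>B. h v (i q y0) * (v g - u v g)) = (\<Sum>v\<in>B. h v x * (v g - u v g))"
        by (rule sum.cong) (auto simp: hh)
      have e3: "i q y0 g = (\<Sum>v\<in>B. h v x * u v g)" using iy0 by metis
      have "Psi w g = (\<Sum>v\<in>B. h v x * u v g) + (\<Sum>v\<in>B. h v x * (v g - u v g))"
        unfolding e1 e2 e3 ..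
      also have "\<dots> = (\<Sum>v\<in>B. h v x * v g)" by (simp add: sum.distrib[symmetric] algebra_simps)
      also have "\<dots> = x g" using hrep[OF xB] by metis
      finally show "Psi w g = x g" .
    qed
    then show "x \<in> F" unfolding F_def using wV by blast
  qed
  have FY: "F \<subseteq> Y"
  proof
    fix x assume "x \<in> F"
    then obtain w where w: "x = Psi w" unfolding F_def by blast
    define y where "y = i q (emb w)"
    have yY: "y \<in> Y" unfolding y_def
      using part1a[OF q sembA[of w, unfolded A_def]] lspan_mono[of "d ` (Gam q - G')" "d ` (UNIV - G')"] LS_Y by blast
    have dY: "(\<lambda>g. 1 * v g + (-1) * u v g) \<in> Y" if "v \<in> B" for v
      by (rule Y_comb[OF BY[OF that] uYY[OF that]])
    have "(\<lambda>g. \<Sum>v\<in>B. h v y * (\<lambda>g. 1 * v g + (-1) * u v g) g) \<in> Y"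
      by (rule Y_sum[OF B(1) dY])
    then have "(\<lambda>g. 1 * y g + 1 * (\<Sum>v\<in>B. h v y * (\<lambda>g. 1 * v g + (-1) * u v g) g)) \<in> Y"
      by (rule Y_comb[OF yY])
    then show "x \<in> Y" unfolding w Psi_def S_def y_def[symmetric] by simp
  qed
  show "\<exists>F. fin_dim_subspace F \<and> E \<subseteq> F \<and> F \<subseteq> Y \<and> linfty_iso (4 * Cb) F"
    using fd EF FY iso by blast
qed

end

theorem proposition1p7:
  fixes Gam :: "nat \<Rightarrow> 'a set"
    and i :: "nat \<Rightarrow> ('a \<Rightarrow> real) \<Rightarrow> ('a \<Rightarrow> real)"
    and G' :: "'a set"
  assumes fin: "\<And>q. 1 \<le> q \<Longrightarrow> finite (Gam q) \<and> Gam q \<noteq> {}"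
    and incr: "\<And>q. 1 \<le> q \<Longrightarrow> Gam q \<subset> Gam (Suc q)"
    and union: "(\<Union>q\<in>{1..}. Gam q) = UNIV"
    and lin: "\<And>q x y a b. 1 \<le> q \<Longrightarrow> supp_in (Gam q) x \<Longrightarrow> supp_in (Gam q) y \<Longrightarrow>
               i q (\<lambda>g. a * x g + b * y g) = (\<lambda>g. a * i q x g + b * i q y g)"
    and ext: "\<And>q x g. 1 \<le> q \<Longrightarrow> supp_in (Gam q) x \<Longrightarrow> g \<in> Gam q \<Longrightarrow> i q x g = x g"
    and bnd: "\<exists>C. \<forall>q\<ge>1. \<forall>x. supp_in (Gam q) x \<longrightarrow> supnorm (i q x) \<le> C * supnorm x"
    and bddval: "\<And>q x. 1 \<le> q \<Longrightarrow> supp_in (Gam q) x \<Longrightarrow> bounded_fn (i q x)"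
    and compat: "\<And>p q x. 1 \<le> p \<Longrightarrow> p < q \<Longrightarrow> supp_in (Gam p) x \<Longrightarrow>
               i p x = i q (restr (Gam q) (i p x))"
    and sd: "self_determined Gam i G'"
  shows "(\<forall>q\<ge>1. i q ` {x. supp_in (Gam q - G') x} = lspan (dvec Gam i ` (Gam q - G')))
         \<and> Linf_space (supclosure (lspan (dvec Gam i ` (UNIV - G'))))"
proof -
  interpret bd Gam i G'
    by (rule bd.intro[OF fin incr union lin ext bnd bddval compat sd])
  show ?thesis using part1 part2 by blast
qed

end
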